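(* Let $n\geq 2$. If a closed subgroup $H$ of $\mathrm{Aut}(\mathbb{A}^n_{\mathbb{C}})$ strictly contains $\mathcal{B}_n$, then $H$ contains a linear automorphism (i.e. an element $(\sum_j a_{1j}x_j,\dots,\sum_j a_{nj}x_j)$ with $(a_{ij})\in\mathrm{GL}_n(\mathbb{C})$) which does not belong to $\mathcal{B}_n$.
   Context: $\mathrm{Aut}(\mathbb{A}^n_{\mathbb{C}})$ is the group of polynomial automorphisms $f=(f_1,\dots,f_n)$ of $\mathbb{A}^n_{\mathbb{C}}$, viewed as an ind-group filtered by degree ($\deg f=\max\deg f_i$); a subset is closed if its intersection with each set of automorphisms of degree $\le d$ is Zariski closed in that variety (a locally closed subset of the affine space $(\mathbb{C}[x_1,\dots,x_n]_{\le d})^n$). $\mathcal{B}_n=\{f: f_i\in\mathbb{C}[x_i,\dots,x_n]\ \forall i\}$ is the triangular (Jonquières) subgroup. *)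

theory Defs
  imports Complex_Main "HOL-Library.Poly_Mapping"
begin

text \<open>Multivariate polynomials over C in variables indexed by 'v, represented
  (as in the AFP entry Polynomials) by finitely supported maps from monomials
  (finitely supported exponent vectors) to coefficients.\<close>

type_synonym 'v cpoly = "('v \<Rightarrow>\<^sub>0 nat) \<Rightarrow>\<^sub>0 complex"

definition peval :: "'v cpoly \<Rightarrow> ('v \<Rightarrow> complex) \<Rightarrow> complex" where
  "peval p x = (\<Sum>m\<in>Poly_Mapping.keys p. Poly_Mapping.lookup p m * (\<Prod>v\<in>Poly_Mapping.keys m. x v ^ Poly_Mapping.lookup m v))"

definition pvars :: "'v cpoly \<Rightarrow> 'v set" where
  "pvars p = (\<Union>m\<in>Poly_Mapping.keys p. Poly_Mapping.keys m)"

definition mdeg :: "('v \<Rightarrow>\<^sub>0 nat) \<Rightarrow> nat" where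
  "mdeg m = (\<Sum>v\<in>Poly_Mapping.keys m. Poly_Mapping.lookup m v)"

text \<open>Polynomial self-maps of A^n: n-tuples (f_0,...,f_{n-1}) of polynomials in
  x_0,...,x_{n-1} (variables indexed 0..n-1; components beyond n are zero).\<close>

definition polymap :: "nat \<Rightarrow> (nat \<Rightarrow> nat cpoly) \<Rightarrow> bool" where
  "polymap n f \<longleftrightarrow> (\<forall>i<n. pvars (f i) \<subseteq> {..<n}) \<and> (\<forall>i\<ge>n. f i = 0)"

definition pts :: "nat \<Rightarrow> (nat \<Rightarrow> complex) set" where
  "pts n = {x. \<forall>i\<ge>n. x i = 0}"

definition ev :: "(nat \<Rightarrow> nat cpoly) \<Rightarrow> (nat \<Rightarrow> complex) \<Rightarrow> (nat \<Rightarrow> complex)" where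
  "ev f x = (\<lambda>i. peval (f i) x)"

definition Aut :: "nat \<Rightarrow> (nat \<Rightarrow> nat cpoly) set" where
  "Aut n = {f. polymap n f \<and> (\<exists>g. polymap n g \<and>
      (\<forall>x\<in>pts n. ev f (ev g x) = x \<and> ev g (ev f x) = x))}"

definition Aut_le :: "nat \<Rightarrow> nat \<Rightarrow> (nat \<Rightarrow> nat cpoly) set" where
  "Aut_le n d = {f\<in>Aut n. \<forall>i<n. \<forall>m\<in>Poly_Mapping.keys (f i). mdeg m \<le> d}"

text \<open>A subset S of Aut_le n d is Zariski closed in it iff it is cut out, inside
  Aut_le n d, by a family of polynomial functions in the coefficients
  (the coordinate indexed by (i,m) is the coefficient of monomial m in f_i).\<close>
definition zar_closed_in :: "nat \<Rightarrow> nat \<Rightarrow> (nat \<Rightarrow> nat cpoly) set \<Rightarrow> bool" where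
  "zar_closed_in n d S \<longleftrightarrow> (\<exists>P :: (nat \<times> (nat \<Rightarrow>\<^sub>0 nat)) cpoly set.
      \<forall>f\<in>Aut_le n d. f \<in> S \<longleftrightarrow> (\<forall>p\<in>P. peval p (\<lambda>(i, m). Poly_Mapping.lookup (f i) m) = 0))"

definition ind_closed :: "nat \<Rightarrow> (nat \<Rightarrow> nat cpoly) set \<Rightarrow> bool" where
  "ind_closed n S \<longleftrightarrow> S \<subseteq> Aut n \<and> (\<forall>d. zar_closed_in n d (S \<inter> Aut_le n d))"

text \<open>Group elements are tuples; the composite/inverse is any polynomial tuple
  inducing the composite/inverse map (such a tuple is unique over C).\<close>
definition aut_subgroup :: "nat \<Rightarrow> (nat \<Rightarrow> nat cpoly) set \<Rightarrow> bool" where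
  "aut_subgroup n H \<longleftrightarrow> H \<subseteq> Aut n \<and>
     (\<exists>e\<in>H. \<forall>x\<in>pts n. ev e x = x) \<and>
     (\<forall>f\<in>H. \<forall>g\<in>H. \<forall>h. polymap n h \<and> (\<forall>x\<in>pts n. ev h x = ev f (ev g x)) \<longrightarrow> h \<in> H) \<and>
     (\<forall>f\<in>H. \<forall>h. polymap n h \<and> (\<forall>x\<in>pts n. ev h (ev f x) = x \<and> ev f (ev h x) = x) \<longrightarrow> h \<in> H)"

definition Bn :: "nat \<Rightarrow> (nat \<Rightarrow> nat cpoly) set" where
  "Bn n = {f\<in>Aut n. \<forall>i<n. pvars (f i) \<subseteq> {i..<n}}"

definition linear_aut :: "nat \<Rightarrow> (nat \<Rightarrow> nat cpoly) \<Rightarrow> bool" where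
  "linear_aut n f \<longleftrightarrow> f \<in> Aut n \<and>
     (\<exists>a :: nat \<Rightarrow> nat \<Rightarrow> complex.
        (\<forall>i<n. f i = (\<Sum>j<n. Poly_Mapping.single (Poly_Mapping.single j 1) (a i j))) \<and>
        (\<exists>b :: nat \<Rightarrow> nat \<Rightarrow> complex. \<forall>i<n. \<forall>j<n.
            (\<Sum>k<n. a i k * b k j) = (if i = j then 1 else 0) \<and>
            (\<Sum>k<n. b i k * a k j) = (if i = j then 1 else 0)))"

end

theory Submission
  imports Defs "HOL-Complex_Analysis.Complex_Analysis"
begin


definition mon :: "('v \<Rightarrow>\<^sub>0 nat) \<Rightarrow> ('v \<Rightarrow> complex) \<Rightarrow> complex" where
  "mon m x = (\<Prod>v\<in>Poly_Mapping.keys m. x v ^ Poly_Mapping.lookup m v)"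

definition mk :: "(('v \<Rightarrow>\<^sub>0 nat) \<Rightarrow> complex) \<Rightarrow> ('v \<Rightarrow>\<^sub>0 nat) set \<Rightarrow> 'v cpoly" where
  "mk F K = Abs_poly_mapping (\<lambda>m. if m \<in> K then F m else 0)"

lemma lookup_mk: "finite K \<Longrightarrow> Poly_Mapping.lookup (mk F K) m = (if m \<in> K then F m else 0)"
  unfolding mk_def by (subst lookup_Abs_poly_mapping) (auto intro: finite_subset[of _ K])

lemma keys_mk: "finite K \<Longrightarrow> Poly_Mapping.keys (mk F K) \<subseteq> K"
  by (auto simp: in_keys_iff lookup_mk split: if_splits)

lemma peval_mono: "peval p x = (\<Sum>m\<in>Poly_Mapping.keys p. Poly_Mapping.lookup p m * mon m x)"
  by (simp add: peval_def mon_def)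

lemma peval_alt:
  assumes "finite K" "Poly_Mapping.keys p \<subseteq> K"
  shows "peval p x = (\<Sum>m\<in>K. Poly_Mapping.lookup p m * mon m x)"
  unfolding peval_mono using assms
  by (intro sum.mono_neutral_left) (auto simp: in_keys_iff)

lemma mon_alt:
  assumes "finite K" "Poly_Mapping.keys m \<subseteq> K"
  shows "mon m x = (\<Prod>v\<in>K. x v ^ Poly_Mapping.lookup m v)"
  unfolding mon_def using assms
  by (intro prod.mono_neutral_left) (auto simp: in_keys_iff)

lemma mon_add: "mon (a + b) x = mon a x * mon b x"
proof -
  let ?K = "Poly_Mapping.keys a \<union> Poly_Mapping.keys b"
  have "mon (a+b) x = (\<Prod>v\<in>?K. x v ^ Poly_Mapping.lookup (a+b) v)"
    by (rule mon_alt) (use keys_add[of a b] in auto)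
  also have "\<dots> = (\<Prod>v\<in>?K. x v ^ Poly_Mapping.lookup a v) * (\<Prod>v\<in>?K. x v ^ Poly_Mapping.lookup b v)"
    by (simp add: lookup_add power_add prod.distrib)
  also have "\<dots> = mon a x * mon b x"
    by (subst (1 2) mon_alt[of ?K]) auto
  finally show ?thesis .
qed

lemma mon_zero[simp]: "mon 0 x = 1" by (simp add: mon_def)

lemma mon_single: "mon (Poly_Mapping.single v 1) x = x v"
  by (simp add: mon_def)

lemma peval_add: "peval (p + q) x = peval p x + peval q x"
proof -
  let ?K = "Poly_Mapping.keys p \<union> Poly_Mapping.keys q"
  have "peval (p+q) x = (\<Sum>m\<in>?K. Poly_Mapping.lookup (p+q) m * mon m x)"
    by (rule peval_alt) (use keys_add[of p q] in auto)
  also have "\<dots> = (\<Sum>m\<in>?K. Poly_Mapping.lookup p m * mon m x) + (\<Sum>m\<in>?K. Poly_Mapping.lookup q m * mon m x)"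
    by (simp add: lookup_add distrib_right sum.distrib)
  also have "\<dots> = peval p x + peval q x"
    by (subst (1 2) peval_alt[of ?K]) auto
  finally show ?thesis .
qed

lemma peval_zero[simp]: "peval 0 x = 0" by (simp add: peval_def)

lemma peval_single: "peval (Poly_Mapping.single m c) x = c * mon m x"
  by (simp add: peval_def mon_def)

lemma peval_sum: "peval (\<Sum>i\<in>I. P i) x = (\<Sum>i\<in>I. peval (P i) x)"
  by (induction I rule: infinite_finite_induct) (auto simp: peval_add)

lemma peval_mk: "finite K \<Longrightarrow> peval (mk F K) x = (\<Sum>m\<in>K. F m * mon m x)"
  by (subst peval_alt[of K]) (auto simp: keys_mk lookup_mk intro: sum.cong)

lemma pvars_add: "pvars (p + q) \<subseteq> pvars p \<union> pvars q"
  unfolding pvars_def using keys_add[of p q] by auto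

lemma pvars_single: "pvars (Poly_Mapping.single m c) \<subseteq> Poly_Mapping.keys m"
  unfolding pvars_def by auto

lemma pvars_sum: "pvars (\<Sum>i\<in>I. P i) \<subseteq> (\<Union>i\<in>I. pvars (P i))"
  unfolding pvars_def using keys_sum[of P I] by blast

lemma pvars_mk: "finite K \<Longrightarrow> pvars (mk F K) \<subseteq> (\<Union>m\<in>K. Poly_Mapping.keys m)"
  unfolding pvars_def using keys_mk[of K F] by auto



definition rep :: "'v set \<Rightarrow> (('v \<Rightarrow> complex) \<Rightarrow> complex) \<Rightarrow> bool" where
  "rep V F \<longleftrightarrow> (\<exists>q. pvars q \<subseteq> V \<and> (\<forall>x. peval q x = F x))"

lemma rep_const: "rep V (\<lambda>x. c)"
  unfolding rep_def
  by (rule exI[of _ "Poly_Mapping.single 0 c"]) (auto simp: peval_single pvars_def)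

lemma rep_var: "v \<in> V \<Longrightarrow> rep V (\<lambda>x. x v)"
  unfolding rep_def
  by (rule exI[of _ "Poly_Mapping.single (Poly_Mapping.single v 1) 1"])
     (auto simp: peval_single mon_def pvars_def)

lemma rep_add: "rep V F \<Longrightarrow> rep V G \<Longrightarrow> rep V (\<lambda>x. F x + G x)"
  unfolding rep_def
  apply clarify
  subgoal for q r by (rule exI[of _ "q + r"]) (use pvars_add[of q r] in \<open>auto simp: peval_add\<close>)
  done

lemma rep_mult: "rep V F \<Longrightarrow> rep V G \<Longrightarrow> rep V (\<lambda>x. F x * G x)"
  unfolding rep_def
proof clarify
  fix q r assume q: "pvars q \<subseteq> V" "\<forall>x. peval q x = F x" and r: "pvars r \<subseteq> V" "\<forall>x. peval r x = G x"
  define s where "s = (\<Sum>a\<in>Poly_Mapping.keys q. \<Sum>b\<in>Poly_Mapping.keys r.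
      Poly_Mapping.single (a + b) (Poly_Mapping.lookup q a * Poly_Mapping.lookup r b))"
  have "peval s x = F x * G x" for x
  proof -
    have "peval s x = (\<Sum>a\<in>Poly_Mapping.keys q. \<Sum>b\<in>Poly_Mapping.keys r.
      (Poly_Mapping.lookup q a * mon a x) * (Poly_Mapping.lookup r b * mon b x))"
      unfolding s_def by (simp add: peval_sum peval_single mon_add mult_ac)
    also have "\<dots> = peval q x * peval r x"
      by (simp add: peval_mono sum_product)
    finally show ?thesis using q r by simp
  qed
  moreover have "pvars s \<subseteq> V"
  proof -
    have "pvars s \<subseteq> (\<Union>a\<in>Poly_Mapping.keys q. \<Union>b\<in>Poly_Mapping.keys r. Poly_Mapping.keys (a + b))"
      unfolding s_def
      apply (rule order_trans[OF pvars_sum], rule UN_mono, simp)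
      apply (rule order_trans[OF pvars_sum], rule UN_mono, simp)
      apply (rule pvars_single)
      done
    also have "\<dots> \<subseteq> V"
    proof -
      have "Poly_Mapping.keys (a+b) \<subseteq> V" if "a \<in> Poly_Mapping.keys q" "b \<in> Poly_Mapping.keys r" for a b
        using q(1) r(1) keys_add[of a b] that unfolding pvars_def by blast
      then show ?thesis by blast
    qed
    finally show ?thesis .
  qed
  ultimately show "\<exists>s. pvars s \<subseteq> V \<and> (\<forall>x. peval s x = F x * G x)" by blast
qed

lemma rep_sum: "(\<And>i. i \<in> I \<Longrightarrow> rep V (F i)) \<Longrightarrow> rep V (\<lambda>x. \<Sum>i\<in>I. F i x)"
  by (induction I rule: infinite_finite_induct) (auto intro: rep_add rep_const)

lemma rep_prod: "(\<And>i. i \<in> I \<Longrightarrow> rep V (F i)) \<Longrightarrow> rep V (\<lambda>x. \<Prod>i\<in>I. F i x)"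
  by (induction I rule: infinite_finite_induct) (auto intro: rep_mult rep_const)

lemma rep_power: "rep V F \<Longrightarrow> rep V (\<lambda>x. F x ^ k)"
  by (induction k) (auto intro: rep_mult rep_const)

lemma rep_subst:
  assumes "\<And>v. v \<in> pvars p \<Longrightarrow> rep V (G v)"
  shows "rep V (\<lambda>x. peval p (\<lambda>v. G v x))"
  unfolding peval_def
  apply (intro rep_sum rep_mult rep_const rep_prod rep_power)
  using assms unfolding pvars_def by auto



lemma digits_bound:
  fixes B :: nat
  assumes "\<forall>v<N. a v < B"
  shows "(\<Sum>v<N. a v * B ^ v) < B ^ N"
  using assms
proof (induction N)
  case 0 then show ?case by simp
next
  case (Suc N)
  have "(\<Sum>v<Suc N. a v * B ^ v) = (\<Sum>v<N. a v * B ^ v) + a N * B ^ N" by simp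
  also have "\<dots> < B ^ N + a N * B ^ N" using Suc by simp
  also have "\<dots> \<le> B ^ N + (B - 1) * B ^ N" using Suc.prems by (intro add_left_mono mult_right_mono) auto
  also have "\<dots> = B ^ Suc N" using Suc.prems
    by (cases B) auto
  finally show ?case .
qed

lemma digits_unique:
  fixes B :: nat
  assumes "\<forall>v<N. a v < B" "\<forall>v<N. b v < B"
    and "(\<Sum>v<N. a v * B ^ v) = (\<Sum>v<N. b v * B ^ v)"
  shows "\<forall>v<N. a v = b v"
  using assms
proof (induction N)
  case 0 then show ?case by simp
next
  case (Suc N)
  let ?A = "\<Sum>v<N. a v * B ^ v" and ?B = "\<Sum>v<N. b v * B ^ v"
  have A: "?A < B ^ N" and Bb: "?B < B ^ N" using Suc.prems digits_bound by auto
  have eq: "?A + a N * B ^ N = ?B + b N * B ^ N" using Suc.prems(3) by simp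
  have "0 < B" using Suc.prems(1) by (metis lessI not_less0 neq0_conv)
  then have nz: "B ^ N \<noteq> 0" by simp
  have "(?A + a N * B ^ N) div B ^ N = a N" using A nz by (simp add: div_less)
  moreover have "(?B + b N * B ^ N) div B ^ N = b N" using Bb nz by (simp add: div_less)
  ultimately have aN: "a N = b N" using eq by simp
  have "?A = ?B" using eq aN by simp
  moreover have "\<forall>v<N. a v < B" "\<forall>v<N. b v < B" using Suc.prems(1,2) by auto
  ultimately have "\<forall>v<N. a v = b v" using Suc.IH by blast
  then show ?case using aN less_Suc_eq by auto
qed

lemma poly_ident:
  assumes vars: "pvars q \<subseteq> {..<N}" and z: "\<forall>x\<in>pts N. peval q x = 0"
  shows "q = 0"
proof (rule ccontr)
  assume "q \<noteq> 0"
  then obtain m0 where m0: "m0 \<in> Poly_Mapping.keys q"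
    by (metis poly_mapping_eqI lookup_zero not_in_keys_iff_lookup_eq_zero)
  define B where "B = Suc (\<Sum>m\<in>Poly_Mapping.keys q. mdeg m)"
  have Bgt: "Poly_Mapping.lookup m v < B" if "m \<in> Poly_Mapping.keys q" for m v
  proof (cases "v \<in> Poly_Mapping.keys m")
    case True
    have "Poly_Mapping.lookup m v \<le> mdeg m" unfolding mdeg_def
      using True by (intro member_le_sum) auto
    also have "\<dots> \<le> (\<Sum>m\<in>Poly_Mapping.keys q. mdeg m)"
      using that by (intro member_le_sum) auto
    finally show ?thesis unfolding B_def by simp
  next
    case False then show ?thesis unfolding B_def by (simp add: in_keys_iff)
  qed
  have kN: "Poly_Mapping.keys m \<subseteq> {..<N}" if "m \<in> Poly_Mapping.keys q" for m
    using vars that unfolding pvars_def by auto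
  define kap where "kap m = (\<Sum>v<N. Poly_Mapping.lookup m v * B ^ v)" for m :: "nat \<Rightarrow>\<^sub>0 nat"
  have inj: "inj_on kap (Poly_Mapping.keys q)"
  proof (rule inj_onI)
    fix m m' assume mm: "m \<in> Poly_Mapping.keys q" "m' \<in> Poly_Mapping.keys q" "kap m = kap m'"
    have "\<forall>v<N. Poly_Mapping.lookup m v = Poly_Mapping.lookup m' v"
      using digits_unique[of N "Poly_Mapping.lookup m" B "Poly_Mapping.lookup m'"] mm Bgt
      unfolding kap_def by blast
    moreover have "Poly_Mapping.lookup m v = Poly_Mapping.lookup m' v" if "\<not> v < N" for v
      using kN[OF mm(1)] kN[OF mm(2)] that by (metis in_keys_iff lessThan_iff subsetD)
    ultimately show "m = m'" by (metis poly_mapping_eqI)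
  qed
  define xt where "xt t = (\<lambda>v. if v < N then t ^ (B ^ v) else 0)" for t :: complex
  have monx: "mon m (xt t) = t ^ kap m" if "m \<in> Poly_Mapping.keys q" for m t
  proof -
    have "mon m (xt t) = (\<Prod>v\<in>{..<N}. xt t v ^ Poly_Mapping.lookup m v)"
      using kN[OF that] by (intro mon_alt) auto
    also have "\<dots> = (\<Prod>v\<in>{..<N}. t ^ (Poly_Mapping.lookup m v * B ^ v))"
      by (intro prod.cong) (auto simp: xt_def power_mult[symmetric] mult.commute)
    also have "\<dots> = t ^ kap m" unfolding kap_def by (simp add: power_sum)
    finally show ?thesis .
  qed
  define K where "K = Max (kap ` Poly_Mapping.keys q)"
  define d where "d k = (\<Sum>m | m \<in> Poly_Mapping.keys q \<and> kap m = k. Poly_Mapping.lookup q m)" for k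
  have "(\<Sum>k\<le>K. d k * t ^ k) = 0" for t
  proof -
    have "(\<Sum>k\<le>K. d k * t ^ k) = (\<Sum>k\<le>K. \<Sum>m | m \<in> Poly_Mapping.keys q \<and> kap m = k. Poly_Mapping.lookup q m * t ^ kap m)"
      unfolding d_def sum_distrib_right by (intro sum.cong refl) auto
    also have "\<dots> = (\<Sum>m\<in>Poly_Mapping.keys q. Poly_Mapping.lookup q m * t ^ kap m)"
      by (rule sum.group) (auto simp: K_def)
    also have "\<dots> = peval q (xt t)"
      unfolding peval_mono by (intro sum.cong) (auto simp: monx)
    also have "\<dots> = 0" using z by (auto simp: pts_def xt_def)
    finally show ?thesis .
  qed
  then have dz: "\<forall>k\<le>K. d k = 0" using polyfun_eq_0[of d K] by blast
  have kle: "kap m0 \<le> K" unfolding K_def using m0 by auto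
  have single: "{m. m \<in> Poly_Mapping.keys q \<and> kap m = kap m0} = {m0}"
    using inj m0 by (auto dest: inj_onD)
  have "d (kap m0) = Poly_Mapping.lookup q m0"
    unfolding d_def single by simp
  moreover have "d (kap m0) = 0" using dz kle by blast
  ultimately show False using m0 by (simp add: in_keys_iff)
qed



definition sc :: "complex \<Rightarrow> 'v cpoly \<Rightarrow> 'v cpoly" where
  "sc s q = mk (\<lambda>m. s ^ (mdeg m - 1) * Poly_Mapping.lookup q m) (Poly_Mapping.keys q)"

lemma lookup_sc: "Poly_Mapping.lookup (sc s q) m = s ^ (mdeg m - 1) * Poly_Mapping.lookup q m"
  unfolding sc_def by (simp add: lookup_mk in_keys_iff)

lemma keys_sc: "Poly_Mapping.keys (sc s q) \<subseteq> Poly_Mapping.keys q"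
  unfolding sc_def by (rule keys_mk) simp

lemma pvars_sc: "pvars (sc s q) \<subseteq> pvars q"
  unfolding pvars_def using keys_sc by blast

lemma peval_sc: "peval (sc s q) y = (\<Sum>m\<in>Poly_Mapping.keys q. s ^ (mdeg m - 1) * Poly_Mapping.lookup q m * mon m y)"
  unfolding sc_def by (simp add: peval_mk)

lemma mdeg_zero: "mdeg m = 0 \<Longrightarrow> m = 0"
  unfolding mdeg_def
  by (rule poly_mapping_eqI) (metis (no_types, lifting) finite_keys in_keys_iff lookup_zero sum_eq_0_iff)

lemma mdeg_single: "mdeg (Poly_Mapping.single v (1::nat)) = 1"
  unfolding mdeg_def by simp

lemma mdeg_one: assumes "mdeg m = 1" shows "\<exists>l. m = Poly_Mapping.single l 1"
proof -
  have "m \<noteq> 0" using assms by (auto simp: mdeg_def)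
  then obtain l where l: "l \<in> Poly_Mapping.keys m"
    by (metis poly_mapping_eqI lookup_zero not_in_keys_iff_lookup_eq_zero)
  have "mdeg m = Poly_Mapping.lookup m l + (\<Sum>v\<in>Poly_Mapping.keys m - {l}. Poly_Mapping.lookup m v)"
    unfolding mdeg_def using l by (simp add: sum.remove)
  moreover have "Poly_Mapping.lookup m l \<ge> 1" using l by (simp add: in_keys_iff)
  ultimately have ml: "Poly_Mapping.lookup m l = 1" and rest: "(\<Sum>v\<in>Poly_Mapping.keys m - {l}. Poly_Mapping.lookup m v) = 0"
    using assms by auto
  have "Poly_Mapping.lookup m v = 0" if "v \<noteq> l" for v
  proof (cases "v \<in> Poly_Mapping.keys m")
    case True then show ?thesis using rest that by (simp add: sum_eq_0_iff)
  next
    case False then show ?thesis by (simp add: in_keys_iff)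
  qed
  then have "m = Poly_Mapping.single l 1"
    by (intro poly_mapping_eqI) (auto simp: lookup_single when_def ml)
  then show ?thesis ..
qed

lemma mon_scale: "mon m (\<lambda>v. s * x v) = s ^ mdeg m * mon m x"
  unfolding mon_def mdeg_def by (simp add: power_mult_distrib prod.distrib power_sum)

lemma mon_at0: "mon m (\<lambda>_. 0) = (if m = 0 then 1 else 0)"
proof (cases "m = 0")
  case False
  then obtain l where l: "l \<in> Poly_Mapping.keys m"
    by (metis poly_mapping_eqI lookup_zero not_in_keys_iff_lookup_eq_zero)
  then show ?thesis unfolding mon_def using False
    by (auto simp: in_keys_iff intro!: prod_zero bexI[of _ l])
qed simp

lemma peval_at0: "peval q (\<lambda>_. 0) = Poly_Mapping.lookup q 0"
proof -
  have "peval q (\<lambda>_. 0) = (\<Sum>m\<in>insert 0 (Poly_Mapping.keys q). Poly_Mapping.lookup q m * mon m (\<lambda>_. 0))"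
    by (rule peval_alt) auto
  also have "\<dots> = Poly_Mapping.lookup q 0"
    by (subst sum.remove[of _ 0]) (auto simp: mon_at0)
  finally show ?thesis .
qed

lemma peval_sc_eq:
  assumes "Poly_Mapping.lookup q 0 = 0" "s \<noteq> 0"
  shows "peval (sc s q) x = peval q (\<lambda>v. s * x v) / s"
proof -
  have "peval q (\<lambda>v. s * x v) = (\<Sum>m\<in>Poly_Mapping.keys q. Poly_Mapping.lookup q m * (s ^ mdeg m * mon m x))"
    by (simp add: peval_mono mon_scale)
  also have "\<dots> = s * (\<Sum>m\<in>Poly_Mapping.keys q. s ^ (mdeg m - 1) * Poly_Mapping.lookup q m * mon m x)"
    unfolding sum_distrib_left
  proof (intro sum.cong refl)
    fix m assume "m \<in> Poly_Mapping.keys q"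
    then have "m \<noteq> 0" using assms(1) by (auto simp: in_keys_iff)
    then have "mdeg m \<noteq> 0" using mdeg_zero by blast
    then have "s ^ mdeg m = s * s ^ (mdeg m - 1)" by (cases "mdeg m") auto
    then show "Poly_Mapping.lookup q m * (s ^ mdeg m * mon m x) = s * (s ^ (mdeg m - 1) * Poly_Mapping.lookup q m * mon m x)"
      by simp
  qed
  finally show ?thesis using assms(2) by (simp add: peval_sc)
qed

lemma peval_cong: assumes "\<And>v. v \<in> pvars q \<Longrightarrow> x v = y v" shows "peval q x = peval q y"
proof -
  have "\<forall>m\<in>Poly_Mapping.keys q. \<forall>v\<in>Poly_Mapping.keys m. x v = y v" using assms unfolding pvars_def by blast
  then show ?thesis unfolding peval_def by (intro sum.cong refl arg_cong2[where f="(*)"] prod.cong) auto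
qed

lemma continuous_peval:
  assumes "\<And>v. continuous_on UNIV (\<lambda>s. Y s v)"
  shows "continuous_on UNIV (\<lambda>s::complex. peval q (Y s))"
  unfolding peval_def using assms by (intro continuous_intros) auto

lemma continuous_peval_sc:
  assumes "\<And>v. continuous_on UNIV (\<lambda>s. Y s v)"
  shows "continuous_on UNIV (\<lambda>s::complex. peval (sc s q) (Y s))"
  unfolding peval_sc mon_def using assms by (intro continuous_intros) auto

lemma cont_zero:
  fixes F :: "complex \<Rightarrow> complex"
  assumes "continuous_on UNIV F" "\<And>s. s \<noteq> 0 \<Longrightarrow> F s = c"
  shows "F 0 = c"
proof -
  have "(F \<longlongrightarrow> F 0) (at 0)" using assms(1)
    by (metis continuous_on_def UNIV_I at_within_open open_UNIV)
  moreover have "(F \<longlongrightarrow> c) (at 0)"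
    by (rule tendsto_eventually) (auto simp: eventually_at_filter assms(2))
  ultimately show ?thesis by (rule tendsto_unique[rotated]) simp
qed

lemma holo_line: "(\<lambda>t. peval q (\<lambda>v. a v + t * b v)) holomorphic_on UNIV"
  unfolding peval_def by (intro holomorphic_intros)



definition aff :: "nat \<Rightarrow> (nat \<Rightarrow> complex) \<Rightarrow> (nat \<Rightarrow> complex) \<Rightarrow> nat \<Rightarrow> nat cpoly" where
  "aff n a b i = (if i < n then Poly_Mapping.single (Poly_Mapping.single i 1) (a i) + Poly_Mapping.single 0 (b i) else 0)"

lemma peval_aff: "i < n \<Longrightarrow> peval (aff n a b i) x = a i * x i + b i"
  by (simp add: aff_def peval_add peval_single mon_def)

lemma ev_aff: "ev (aff n a b) x = (\<lambda>i. if i < n then a i * x i + b i else 0)"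
proof
  fix i show "ev (aff n a b) x i = (if i < n then a i * x i + b i else 0)"
    by (cases "i < n") (simp_all add: ev_def peval_aff, simp add: aff_def)
qed

lemma pvars_aff: "pvars (aff n a b i) \<subseteq> {i}"
proof -
  have "pvars (Poly_Mapping.single (Poly_Mapping.single i (1::nat)) (a i) + Poly_Mapping.single 0 (b i)) \<subseteq> {i}"
    using pvars_add[of "Poly_Mapping.single (Poly_Mapping.single i (1::nat)) (a i)" "Poly_Mapping.single 0 (b i)"]
      pvars_single[of "Poly_Mapping.single i (1::nat)" "a i"] pvars_single[of 0 "b i"] by auto
  then show ?thesis by (auto simp: aff_def pvars_def)
qed

lemma polymap_aff: "polymap n (aff n a b)"
proof -
  have "\<forall>i<n. pvars (aff n a b i) \<subseteq> {..<n}" using pvars_aff[of n a b] by force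
  moreover have "\<forall>i\<ge>n. aff n a b i = 0" by (simp add: aff_def)
  ultimately show ?thesis unfolding polymap_def by blast
qed

lemma ev_pts: "polymap n f \<Longrightarrow> ev f x \<in> pts n"
  by (simp add: polymap_def pts_def ev_def)

lemma aff_Bn: assumes "\<forall>i<n. a i \<noteq> 0" shows "aff n a b \<in> Bn n"
proof -
  have "aff n a b \<in> Aut n"
    unfolding Aut_def
  proof (intro CollectI conjI polymap_aff exI[of _ "aff n (\<lambda>i. 1 / a i) (\<lambda>i. - b i / a i)"] ballI)
    fix x assume x: "x \<in> pts n"
    show "ev (aff n a b) (ev (aff n (\<lambda>i. 1 / a i) (\<lambda>i. - b i / a i)) x) = x"
      using x assms by (auto simp: ev_aff pts_def field_simps)
    show "ev (aff n (\<lambda>i. 1 / a i) (\<lambda>i. - b i / a i)) (ev (aff n a b) x) = x"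
      using x assms by (auto simp: ev_aff pts_def field_simps)
  qed
  then show ?thesis unfolding Bn_def using pvars_aff by fastforce
qed

lemma H_comp:
  assumes "aut_subgroup n H" "f \<in> H" "g \<in> H" "polymap n h" "\<forall>x\<in>pts n. ev h x = ev f (ev g x)"
  shows "h \<in> H"
  using assms unfolding aut_subgroup_def by blast

lemma rep_polymap:
  assumes "\<forall>k<n. rep {..<n} (F k)"
  shows "\<exists>h. polymap n h \<and> (\<forall>k<n. \<forall>x. peval (h k) x = F k x)"
proof -
  from assms obtain Q where Q: "\<forall>k<n. pvars (Q k) \<subseteq> {..<n} \<and> (\<forall>x. peval (Q k) x = F k x)"
    unfolding rep_def by metis
  show ?thesis
    by (rule exI[of _ "\<lambda>k. if k < n then Q k else 0"]) (use Q in \<open>auto simp: polymap_def\<close>)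
qed

lemma sc_zero[simp]: "sc s 0 = 0"
  by (rule poly_mapping_eqI) (simp add: lookup_sc)

lemma limit_inverse:
  assumes g: "polymap n g" and g': "polymap n g'"
    and z: "\<And>k. Poly_Mapping.lookup (g k) 0 = 0" "\<And>k. Poly_Mapping.lookup (g' k) 0 = 0"
    and inv: "\<forall>x\<in>pts n. ev g (ev g' x) = x" and x: "x \<in> pts n"
  shows "ev (\<lambda>k. sc 0 (g k)) (ev (\<lambda>k. sc 0 (g' k)) x) = x"
proof
  fix k
  show "ev (\<lambda>k. sc 0 (g k)) (ev (\<lambda>k. sc 0 (g' k)) x) k = x k"
  proof (cases "k < n")
    case False then show ?thesis using g x by (simp add: polymap_def pts_def ev_def)
  next
    case True
    let ?F = "\<lambda>s. peval (sc s (g k)) (\<lambda>v. peval (sc s (g' v)) x)"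
    have "continuous_on UNIV ?F"
      by (intro continuous_peval_sc) (simp add: peval_sc mon_def continuous_intros)
    moreover have "?F s = x k" if s: "s \<noteq> 0" for s
    proof -
      have sx: "(\<lambda>v. s * x v) \<in> pts n" using x by (simp add: pts_def)
      have "?F s = peval (g k) (\<lambda>v. s * (peval (g' v) (\<lambda>v. s * x v) / s)) / s"
        using s z by (simp add: peval_sc_eq)
      also have "(\<lambda>v. s * (peval (g' v) (\<lambda>v. s * x v) / s)) = ev g' (\<lambda>v. s * x v)"
        using s by (simp add: ev_def)
      also have "peval (g k) (ev g' (\<lambda>v. s * x v)) = ev g (ev g' (\<lambda>v. s * x v)) k" by (simp add: ev_def)
      also have "\<dots> = s * x k" using inv sx by simp
      finally show ?thesis using s by simp
    qed
    ultimately have "?F 0 = x k" by (rule cont_zero)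
    then show ?thesis by (simp add: ev_def)
  qed
qed

lemma lin_form:
  assumes g: "polymap n g" and z: "Poly_Mapping.lookup (g k) 0 = 0"
  shows "sc 0 (g k) = (\<Sum>l<n. Poly_Mapping.single (Poly_Mapping.single l 1) (Poly_Mapping.lookup (g k) (Poly_Mapping.single l 1)))"
proof (rule poly_mapping_eqI)
  fix m
  have R: "Poly_Mapping.lookup (\<Sum>l<n. Poly_Mapping.single (Poly_Mapping.single l 1) (Poly_Mapping.lookup (g k) (Poly_Mapping.single l 1))) m
      = (\<Sum>l<n. if Poly_Mapping.single l 1 = m then Poly_Mapping.lookup (g k) m else 0)"
    by (auto simp: lookup_sum lookup_single when_def intro!: sum.cong)
  show "Poly_Mapping.lookup (sc 0 (g k)) m = Poly_Mapping.lookup (\<Sum>l<n. Poly_Mapping.single (Poly_Mapping.single l 1) (Poly_Mapping.lookup (g k) (Poly_Mapping.single l 1))) m"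
    unfolding R lookup_sc
  proof (cases "mdeg m = 1")
    case True
    then obtain l0 where m: "m = Poly_Mapping.single l0 1" using mdeg_one by blast
    have inj: "Poly_Mapping.single l 1 = m \<longleftrightarrow> l = l0" for l
      unfolding m by (metis lookup_single_eq lookup_single_not_eq one_neq_zero)
    show "0 ^ (mdeg m - 1) * Poly_Mapping.lookup (g k) m = (\<Sum>l<n. if Poly_Mapping.single l 1 = m then Poly_Mapping.lookup (g k) m else 0)"
    proof (cases "l0 < n")
      case True then show ?thesis using \<open>mdeg m = 1\<close> by (unfold inj) (simp add: sum.delta sum.delta')
    next
      case False
      have "Poly_Mapping.lookup (g k) m = 0"
      proof (rule ccontr)
        assume "Poly_Mapping.lookup (g k) m \<noteq> 0"
        then have "m \<in> Poly_Mapping.keys (g k)" by (simp add: in_keys_iff)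
        moreover have "l0 \<in> Poly_Mapping.keys m" unfolding m by simp
        ultimately have "l0 \<in> pvars (g k)" unfolding pvars_def by blast
        moreover have "pvars (g k) \<subseteq> {..<n}"
          using g unfolding polymap_def by (cases "k < n") (auto simp: pvars_def)
        ultimately show False using False by auto
      qed
      then show ?thesis by (unfold inj) simp
    qed
  next
    case False
    have ne: "Poly_Mapping.single l 1 \<noteq> m" for l using False mdeg_single by metis
    show "0 ^ (mdeg m - 1) * Poly_Mapping.lookup (g k) m = (\<Sum>l<n. if Poly_Mapping.single l 1 = m then Poly_Mapping.lookup (g k) m else 0)"
    proof (cases "mdeg m = 0")
      case True then have "m = 0" by (rule mdeg_zero)
      then show ?thesis using z ne by simp
    next
      case False2: False
      then have "mdeg m - 1 \<noteq> 0" using False by auto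
      then show ?thesis using ne by simp
    qed
  qed
qed

lemma peval_lin: "peval (\<Sum>l<n. Poly_Mapping.single (Poly_Mapping.single l 1) (a l)) y = (\<Sum>l<n. a l * y l)"
  by (simp add: peval_sum peval_single mon_def)



lemma polymap_vars: "polymap n f \<Longrightarrow> pvars (f k) \<subseteq> {..<n}"
  unfolding polymap_def by (cases "k < n") (auto simp: pvars_def)

lemma mon_upd0: "mon m (x(j := 0)) = (if Poly_Mapping.lookup m j \<noteq> 0 then 0 else mon m x)"
proof (cases "Poly_Mapping.lookup m j \<noteq> 0")
  case True
  then have "j \<in> Poly_Mapping.keys m" by (simp add: in_keys_iff)
  then show ?thesis unfolding mon_def using True by (auto intro!: prod_zero bexI[of _ j])
next
  case False
  then have "j \<notin> Poly_Mapping.keys m" by (simp add: in_keys_iff)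
  then show ?thesis unfolding mon_def using False by (auto intro!: prod.cong)
qed

lemma deriv_exists:
  assumes pf: "polymap n f0" and i: "i < n" and j: "j < n" and jv: "j \<in> pvars (f0 i)"
  defines "e \<equiv> (\<lambda>v::nat. if v = j then (1::complex) else 0)"
  shows "\<exists>p\<in>pts n. deriv (\<lambda>t. peval (f0 i) (\<lambda>v. p v + t * e v)) 0 \<noteq> 0"
proof (rule ccontr)
  define \<phi> where "\<phi> p t = peval (f0 i) (\<lambda>v. p v + t * e v)" for p t
  assume "\<not> ?thesis"
  then have allz: "\<forall>p\<in>pts n. deriv (\<phi> p) 0 = 0" unfolding \<phi>_def by auto
  have der: "(\<phi> p has_field_derivative deriv (\<phi> p) t) (at t)" for p t
    unfolding \<phi>_def by (rule holomorphic_derivI[OF holo_line]) auto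
  have epts: "(\<lambda>v. p v + t * e v) \<in> pts n" if "p \<in> pts n" for p t
    using that j by (auto simp: pts_def e_def)
  have const: "\<phi> p t = \<phi> p 0" if p: "p \<in> pts n" for p t
  proof -
    have "(\<phi> p has_field_derivative 0) (at t0)" for t0
    proof -
      define p' where "p' = (\<lambda>v. p v + t0 * e v)"
      have "p' \<in> pts n" unfolding p'_def using epts p .
      then have "(\<phi> p' has_field_derivative 0) (at 0)" using der[of p' 0] allz by simp
      moreover have "\<phi> p' = (\<lambda>u. \<phi> p (u + t0))"
        unfolding \<phi>_def p'_def by (intro ext arg_cong[where f="peval (f0 i)"]) (auto simp: algebra_simps)
      ultimately have "((\<lambda>u. \<phi> p (u + t0)) has_field_derivative 0) (at 0)" by simp
      then show ?thesis using DERIV_shift[of "\<phi> p" 0 0 t0] by simp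
    qed
    then obtain c where "\<forall>t\<in>UNIV. \<phi> p t = c"
      using has_field_derivative_zero_constant[of UNIV "\<phi> p"] by auto
    then show ?thesis by simp
  qed
  have fx: "peval (f0 i) x = peval (f0 i) (x(j := 0))" if x: "x \<in> pts n" for x
  proof -
    have p: "x(j := 0) \<in> pts n" using x by (auto simp: pts_def)
    have "peval (f0 i) x = \<phi> (x(j := 0)) (x j)"
      unfolding \<phi>_def by (intro arg_cong[where f="peval (f0 i)"] ext) (auto simp: e_def)
    also have "\<dots> = \<phi> (x(j := 0)) 0" using const[OF p] .
    also have "\<dots> = peval (f0 i) (x(j := 0))" unfolding \<phi>_def
      by (intro arg_cong[where f="peval (f0 i)"] ext) auto
    finally show ?thesis .
  qed
  define K where "K = {m \<in> Poly_Mapping.keys (f0 i). Poly_Mapping.lookup m j \<noteq> 0}"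
  define r where "r = mk (Poly_Mapping.lookup (f0 i)) K"
  have fK: "finite K" unfolding K_def by simp
  have "peval r x = peval (f0 i) x - peval (f0 i) (x(j := 0))" for x
  proof -
    have "peval r x = (\<Sum>m\<in>Poly_Mapping.keys (f0 i). (if Poly_Mapping.lookup m j \<noteq> 0 then Poly_Mapping.lookup (f0 i) m else 0) * mon m x)"
      unfolding r_def using fK keys_mk[OF fK]
      by (subst peval_alt[of "Poly_Mapping.keys (f0 i)"]) (auto simp: K_def lookup_mk intro!: sum.cong)
    also have "\<dots> = peval (f0 i) x - peval (f0 i) (x(j := 0))"
      unfolding peval_mono sum_subtractf[symmetric] by (intro sum.cong) (auto simp: mon_upd0)
    finally show ?thesis .
  qed
  then have "\<forall>x\<in>pts n. peval r x = 0" using fx by simp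
  moreover have "pvars r \<subseteq> {..<n}"
    using pvars_mk[OF fK, of "Poly_Mapping.lookup (f0 i)"] polymap_vars[OF pf, of i]
    unfolding r_def K_def pvars_def by blast
  ultimately have "r = 0" by (intro poly_ident) auto
  moreover obtain m where m: "m \<in> Poly_Mapping.keys (f0 i)" "j \<in> Poly_Mapping.keys m"
    using jv unfolding pvars_def by blast
  moreover have "Poly_Mapping.lookup r m = Poly_Mapping.lookup (f0 i) m"
  proof -
    have "m \<in> K" using m unfolding K_def by (simp add: in_keys_iff)
    then show ?thesis unfolding r_def by (simp add: lookup_mk[OF fK])
  qed
  ultimately show False by (simp add: in_keys_iff)
qed



theorem proposition3p3:
  fixes n :: nat and H :: "(nat \<Rightarrow> nat cpoly) set"
  assumes "n \<ge> 2"
    and "aut_subgroup n H"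
    and "ind_closed n H"
    and "Bn n \<subset> H"
  shows "\<exists>f\<in>H. linear_aut n f \<and> f \<notin> Bn n"
proof -
  have sub: "aut_subgroup n H" using assms(2) .
  have HA: "H \<subseteq> Aut n" using assms(2) unfolding aut_subgroup_def by (rule conjunct1)
  have BH: "Bn n \<subseteq> H" using assms(4) by (rule psubset_imp_subset)
  obtain f where fH: "f \<in> H" and fB: "f \<notin> Bn n" using assms(4) by blast
  have fA: "f \<in> Aut n" using fH HA by blast
  then have pf: "polymap n f" unfolding Aut_def by blast
  obtain i where i: "i < n" and ni: "\<not> pvars (f i) \<subseteq> {i..<n}"
    using fA fB unfolding Bn_def by auto
  from ni obtain j where jv: "j \<in> pvars (f i)" and jn': "j \<notin> {i..<n}" by blast
  have jn: "j < n" using jv polymap_vars[OF pf, of i] by auto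
  have ji: "j < i" using jn jn' by auto
  define e where "e = (\<lambda>v::nat. if v = j then (1::complex) else 0)"
  have epts: "e \<in> pts n" using jn by (auto simp: e_def pts_def)
  from deriv_exists[OF pf i jn jv] obtain p where p: "p \<in> pts n"
    and Dnz0: "deriv (\<lambda>t. peval (f i) (\<lambda>v. p v + t * (if v = j then 1 else 0))) 0 \<noteq> 0"
    by (elim bexE)
  have Dnz: "deriv (\<lambda>t. peval (f i) (\<lambda>v. p v + t * e v)) 0 \<noteq> 0" using Dnz0 unfolding e_def .
  define \<phi> where "\<phi> t = peval (f i) (\<lambda>v. p v + t * e v)" for t
  define D where "D = deriv \<phi> 0"
  have der: "(\<phi> has_field_derivative D) (at 0)"
    unfolding D_def \<phi>_def by (rule holomorphic_derivI[OF holo_line]) auto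
  have "D \<noteq> 0" using Dnz unfolding D_def \<phi>_def .

  have repf: "rep {..<n} (\<lambda>x. peval (f k) (\<lambda>v. x v + p v))" if "k < n" for k
  proof (rule rep_subst)
    fix v assume "v \<in> pvars (f k)"
    then have "v \<in> {..<n}" using polymap_vars[OF pf, of k] by blast
    then show "rep {..<n} (\<lambda>x. x v + p v)" by (rule rep_add[OF rep_var rep_const])
  qed
  have "\<forall>k<n. rep {..<n} (\<lambda>x. peval (f k) (\<lambda>v. x v + p v))" using repf by blast
  from rep_polymap[OF this] obtain h where ph: "polymap n h"
    and hev: "\<forall>k<n. \<forall>x. peval (h k) x = peval (f k) (\<lambda>v. x v + p v)" by (elim exE conjE)
  have "\<forall>k<n. rep {..<n} (\<lambda>x. peval (f k) (\<lambda>v. x v + p v) + - peval (f k) p)"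
    by (intro allI impI rep_add[OF repf rep_const])
  from rep_polymap[OF this] obtain g where pg: "polymap n g"
    and gev: "\<forall>k<n. \<forall>x. peval (g k) x = peval (f k) (\<lambda>v. x v + p v) + - peval (f k) p" by (elim exE conjE)
  have hH: "h \<in> H"
  proof (rule H_comp[OF sub fH BH[THEN subsetD, OF aff_Bn[of n "\<lambda>_. 1" p]] ph])
    show "\<forall>x\<in>pts n. ev h x = ev f (ev (aff n (\<lambda>_. 1) p) x)"
    proof (intro ballI ext)
      fix x k assume x: "x \<in> pts n"
      show "ev h x k = ev f (ev (aff n (\<lambda>_. 1) p) x) k"
      proof (cases "k < n")
        case True
        have "peval (f k) (ev (aff n (\<lambda>_. 1) p) x) = peval (f k) (\<lambda>v. x v + p v)"
          by (rule peval_cong) (use polymap_vars[OF pf, of k] in \<open>auto simp: ev_aff\<close>)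
        then show ?thesis using True hev by (simp add: ev_def)
      next
        case False then show ?thesis using ph pf by (simp add: ev_def polymap_def)
      qed
    qed
  qed simp
  have gH: "g \<in> H"
  proof (rule H_comp[OF sub BH[THEN subsetD, OF aff_Bn[of n "\<lambda>_. 1" "\<lambda>k. - peval (f k) p"]] hH pg])
    show "\<forall>x\<in>pts n. ev g x = ev (aff n (\<lambda>_. 1) (\<lambda>k. - peval (f k) p)) (ev h x)"
    proof (intro ballI ext)
      fix x k assume x: "x \<in> pts n"
      show "ev g x k = ev (aff n (\<lambda>_. 1) (\<lambda>k. - peval (f k) p)) (ev h x) k"
      proof (cases "k < n")
        case True then show ?thesis using gev hev by (simp add: ev_aff) (simp add: ev_def)
      next
        case False then show ?thesis using pg by (simp add: ev_aff) (simp add: ev_def polymap_def)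
      qed
    qed
  qed simp
  have g0: "Poly_Mapping.lookup (g k) 0 = 0" for k
  proof (cases "k < n")
    case True
    have "Poly_Mapping.lookup (g k) 0 = peval (g k) (\<lambda>_. 0)" by (simp add: peval_at0)
    also have "\<dots> = 0" using gev True by simp
    finally show ?thesis .
  next
    case False then show ?thesis using pg by (simp add: polymap_def)
  qed
  have gA: "g \<in> Aut n" using gH HA by auto
  then obtain g' where pg': "polymap n g'" and inv: "\<forall>x\<in>pts n. ev g (ev g' x) = x \<and> ev g' (ev g x) = x"
    unfolding Aut_def by auto
  have z0: "(\<lambda>_. 0::complex) \<in> pts n" by (simp add: pts_def)
  have evg0: "ev g (\<lambda>_. 0) = (\<lambda>_. 0)" by (simp add: ev_def peval_at0 g0)
  have g'0: "Poly_Mapping.lookup (g' k) 0 = 0" for k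
  proof -
    have "ev g' (\<lambda>_. 0) = (\<lambda>_. 0)" using inv z0 evg0 by metis
    then have "peval (g' k) (\<lambda>_. 0) = 0" unfolding ev_def by metis
    then show ?thesis by (simp add: peval_at0)
  qed

  define c where "c s = (\<lambda>k. sc s (g k))" for s
  define L where "L = c 0"
  define L' where "L' = (\<lambda>k. sc 0 (g' k))"
  have pc: "polymap n (c s)" for s
  proof -
    have "pvars (c s i) \<subseteq> {..<n}" for i
      using pvars_sc[of s "g i"] polymap_vars[OF pg, of i] unfolding c_def by blast
    moreover have "\<forall>i\<ge>n. c s i = 0" using pg by (simp add: c_def polymap_def)
    ultimately show ?thesis unfolding polymap_def by blast
  qed
  have pL': "polymap n L'"
  proof -
    have "pvars (L' i) \<subseteq> {..<n}" for i
      using pvars_sc[of 0 "g' i"] polymap_vars[OF pg', of i] unfolding L'_def by blast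
    moreover have "\<forall>i\<ge>n. L' i = 0" using pg' by (simp add: L'_def polymap_def)
    ultimately show ?thesis unfolding polymap_def by blast
  qed
  have cH: "c s \<in> H" if s: "s \<noteq> 0" for s
  proof -
    have "\<forall>k<n. rep {..<n} (\<lambda>x. peval (g k) (\<lambda>v. s * x v))"
      using polymap_vars[OF pg] by (auto intro!: rep_subst rep_mult rep_var rep_const)
    from rep_polymap[OF this] obtain r where pr: "polymap n r" and rev: "\<forall>k<n. \<forall>x. peval (r k) x = peval (g k) (\<lambda>v. s * x v)"
      by (elim exE conjE)
    have rH: "r \<in> H"
    proof (rule H_comp[OF sub gH BH[THEN subsetD, OF aff_Bn[of n "\<lambda>_. s" "\<lambda>_. 0"]] pr])
      show "\<forall>x\<in>pts n. ev r x = ev g (ev (aff n (\<lambda>_. s) (\<lambda>_. 0)) x)"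
      proof (intro ballI ext)
        fix x k assume x: "x \<in> pts n"
        show "ev r x k = ev g (ev (aff n (\<lambda>_. s) (\<lambda>_. 0)) x) k"
        proof (cases "k < n")
          case True
          have "peval (g k) (ev (aff n (\<lambda>_. s) (\<lambda>_. 0)) x) = peval (g k) (\<lambda>v. s * x v)"
            by (rule peval_cong) (use polymap_vars[OF pg, of k] in \<open>auto simp: ev_aff\<close>)
          then show ?thesis using True rev by (simp add: ev_def)
        next
          case False then show ?thesis using pr pg by (simp add: ev_def polymap_def)
        qed
      qed
    qed (use s in simp)
    show ?thesis
    proof (rule H_comp[OF sub BH[THEN subsetD, OF aff_Bn[of n "\<lambda>_. 1 / s" "\<lambda>_. 0"]] rH pc])
      show "\<forall>x\<in>pts n. ev (c s) x = ev (aff n (\<lambda>_. 1 / s) (\<lambda>_. 0)) (ev r x)"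
      proof (intro ballI ext)
        fix x k assume x: "x \<in> pts n"
        show "ev (c s) x k = ev (aff n (\<lambda>_. 1 / s) (\<lambda>_. 0)) (ev r x) k"
        proof (cases "k < n")
          case True
          then show ?thesis using rev s g0 unfolding ev_aff by (simp add: ev_def c_def peval_sc_eq)
        next
          case False then show ?thesis using pg unfolding ev_aff by (simp add: ev_def polymap_def c_def)
        qed
      qed
    qed (use s in simp)
  qed

  define d where "d = Suc (\<Sum>k<n. \<Sum>m\<in>Poly_Mapping.keys (g k). mdeg m)"
  have degb: "\<forall>k<n. \<forall>m\<in>Poly_Mapping.keys (c s k). mdeg m \<le> d" for s
  proof (intro allI impI ballI)
    fix k m assume k: "k < n" and m: "m \<in> Poly_Mapping.keys (c s k)"
    then have m': "m \<in> Poly_Mapping.keys (g k)" using keys_sc unfolding c_def by blast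
    have "mdeg m \<le> (\<Sum>m\<in>Poly_Mapping.keys (g k). mdeg m)" using m' by (intro member_le_sum) auto
    also have "\<dots> \<le> (\<Sum>k<n. \<Sum>m\<in>Poly_Mapping.keys (g k). mdeg m)"
      using k by (intro member_le_sum) auto
    finally show "mdeg m \<le> d" unfolding d_def by simp
  qed

  have inv1: "ev L (ev L' x) = x" if "x \<in> pts n" for x
    unfolding L_def L'_def c_def using limit_inverse[OF pg pg' g0 g'0] inv that by blast
  have inv2: "ev L' (ev L x) = x" if "x \<in> pts n" for x
    unfolding L_def L'_def c_def using limit_inverse[OF pg' pg g'0 g0] inv that by blast
  have pL: "polymap n L" using pc[of 0] unfolding L_def .
  have LA: "L \<in> Aut n"
    unfolding Aut_def by (intro CollectI conjI pL exI[of _ L'] pL' ballI inv1 inv2)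
  have LAle: "L \<in> Aut_le n d" unfolding Aut_le_def using LA degb[of 0] unfolding L_def by simp
  have cAle: "c s \<in> Aut_le n d" if "s \<noteq> 0" for s
    unfolding Aut_le_def using cH[OF that] HA degb[of s] by auto

  obtain P where P: "\<forall>f\<in>Aut_le n d. f \<in> H \<inter> Aut_le n d \<longleftrightarrow>
      (\<forall>pp\<in>P. peval pp (\<lambda>(i, m). Poly_Mapping.lookup (f i) m) = 0)"
    using assms(3) unfolding ind_closed_def zar_closed_in_def by blast
  have LH: "L \<in> H"
  proof -
    have "peval pp (\<lambda>(i, m). Poly_Mapping.lookup (L i) m) = 0" if pp: "pp \<in> P" for pp
    proof -
      let ?F = "\<lambda>s. peval pp (\<lambda>(i, m). Poly_Mapping.lookup (c s i) m)"
      have "continuous_on UNIV ?F"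
      proof (rule continuous_peval)
        fix v :: "nat \<times> (nat \<Rightarrow>\<^sub>0 nat)"
        obtain k m where v: "v = (k, m)" by (cases v)
        show "continuous_on UNIV (\<lambda>s. case v of (i, m) \<Rightarrow> Poly_Mapping.lookup (c s i) m)"
          unfolding v by (simp add: c_def lookup_sc continuous_intros)
      qed
      moreover have "?F s = 0" if "s \<noteq> 0" for s
        using P[rule_format, OF cAle[OF that]] cH[OF that] cAle[OF that] pp by simp
      ultimately have "?F 0 = 0" by (rule cont_zero)
      then show ?thesis unfolding L_def .
    qed
    then show ?thesis using P[rule_format, OF LAle] by simp
  qed

  define a where "a k l = Poly_Mapping.lookup (g k) (Poly_Mapping.single l 1)" for k l
  define b where "b k l = Poly_Mapping.lookup (g' k) (Poly_Mapping.single l 1)" for k l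
  have Lform: "\<forall>k<n. L k = (\<Sum>l<n. Poly_Mapping.single (Poly_Mapping.single l 1) (a k l))"
    unfolding L_def c_def a_def using lin_form[OF pg g0] by blast
  have L'form: "\<forall>k<n. L' k = (\<Sum>l<n. Poly_Mapping.single (Poly_Mapping.single l 1) (b k l))"
    unfolding L'_def b_def using lin_form[OF pg' g'0] by blast
  have evL: "ev L y k = (\<Sum>l<n. a k l * y l)" if "k < n" for y k
    unfolding ev_def by (subst Lform[rule_format, OF that]) (rule peval_lin)
  have evL': "ev L' y k = (\<Sum>l<n. b k l * y l)" if "k < n" for y k
    unfolding ev_def by (subst L'form[rule_format, OF that]) (rule peval_lin)
  have unit: "(\<lambda>v. if v = l then (1::complex) else 0) \<in> pts n" if "l < n" for l
    using that by (auto simp: pts_def)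
  have sumu: "(\<Sum>l<n. F l * (if l = l' then (1::complex) else 0)) = F l'" if "l' < n" for F l'
  proof -
    have "(\<Sum>l<n. F l * (if l = l' then (1::complex) else 0)) = (\<Sum>l<n. if l = l' then F l else 0)"
      by (intro sum.cong) auto
    then show ?thesis using that by simp
  qed
  have AB: "(\<Sum>k<n. a i' k * b k j') = (if i' = j' then 1 else 0) \<and> (\<Sum>k<n. b i' k * a k j') = (if i' = j' then 1 else 0)"
    if "i' < n" "j' < n" for i' j'
  proof
    let ?u = "\<lambda>v. if v = j' then (1::complex) else 0"
    have "ev L (ev L' ?u) i' = ?u i'" using inv1[OF unit[OF that(2)]] by simp
    moreover have "ev L (ev L' ?u) i' = (\<Sum>k<n. a i' k * b k j')"
      using that by (simp add: evL evL' sumu)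
    ultimately show "(\<Sum>k<n. a i' k * b k j') = (if i' = j' then 1 else 0)" by simp
    have "ev L' (ev L ?u) i' = ?u i'" using inv2[OF unit[OF that(2)]] by simp
    moreover have "ev L' (ev L ?u) i' = (\<Sum>k<n. b i' k * a k j')"
      using that by (simp add: evL evL' sumu)
    ultimately show "(\<Sum>k<n. b i' k * a k j') = (if i' = j' then 1 else 0)" by simp
  qed
  have Llin: "linear_aut n L"
    unfolding linear_aut_def
    by (intro conjI LA exI[of _ a] exI[of _ b] allI impI Lform[rule_format] AB[THEN conjunct1] AB[THEN conjunct2])

  have aD: "a i j = D"
  proof -
    let ?\<Psi> = "\<lambda>s. peval (sc s (g i)) e"
    have "continuous_on UNIV ?\<Psi>" by (intro continuous_peval_sc continuous_intros)
    then have lim1: "(?\<Psi> \<longlongrightarrow> ?\<Psi> 0) (at 0)"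
      by (metis continuous_on_def UNIV_I)
    have "((\<lambda>y. (\<phi> y - \<phi> 0) / (y - 0)) \<longlongrightarrow> D) (at 0)"
      using der by (simp add: has_field_derivative_iff)
    moreover have "\<forall>\<^sub>F y in at 0. (\<phi> y - \<phi> 0) / (y - 0) = ?\<Psi> y"
    proof (rule eventually_at_filter[THEN iffD2], intro always_eventually allI impI)
      fix y :: complex assume y: "y \<noteq> 0"
      have "?\<Psi> y = peval (g i) (\<lambda>v. y * e v) / y" using y g0 by (simp add: peval_sc_eq)
      also have "peval (g i) (\<lambda>v. y * e v) = \<phi> y - \<phi> 0"
        using gev i unfolding \<phi>_def by (simp add: algebra_simps)
      finally show "(\<phi> y - \<phi> 0) / (y - 0) = ?\<Psi> y" by simp
    qed
    ultimately have "(?\<Psi> \<longlongrightarrow> D) (at 0)" by (rule Lim_transform_eventually)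
    with lim1 have "?\<Psi> 0 = D" by (rule tendsto_unique[rotated]) simp
    moreover have "?\<Psi> 0 = ev L e i" unfolding L_def c_def ev_def by simp
    moreover have "ev L e i = a i j" using evL[OF i] jn unfolding e_def by (simp add: sumu)
    ultimately show ?thesis by simp
  qed
  have LB: "L \<notin> Bn n"
  proof
    assume "L \<in> Bn n"
    then have sub': "pvars (L i) \<subseteq> {i..<n}" using i unfolding Bn_def by blast
    have "Poly_Mapping.lookup (L i) (Poly_Mapping.single j 1) = a i j"
      unfolding L_def c_def a_def lookup_sc mdeg_single by simp
    then have "Poly_Mapping.single j 1 \<in> Poly_Mapping.keys (L i)"
      using aD \<open>D \<noteq> 0\<close> by (simp add: in_keys_iff)
    then have "j \<in> pvars (L i)" unfolding pvars_def by force
    then show False using sub' ji by auto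
  qed
  show ?thesis using LH Llin LB by blast
qed

end
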